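(* Let $\kappa,\gamma\in\mathbb{N}^n$ and let $T:\mathbb{C}_\kappa[z_1,\ldots,z_n]\to\mathbb{C}_\gamma[z_1,\ldots,z_n]$ be a linear operator. Then the symbol of the polarization of $T$ is the polarization of the symbol of $T$, that is, $G_{\Pi(T)}=\Pi^\uparrow_{\gamma\oplus\kappa}(G_T)$.
   Context: $\mathbb{C}_\kappa[z_1,\ldots,z_n]$: polynomials of degree at most $\kappa_i$ in $z_i$. $\mathbb{C}_{MA}^\kappa$: multi-affine polynomials in variables $z_{ij}$, $1\le i\le n$, $1\le j\le\kappa_i$. Polarization $\Pi_\kappa^\uparrow:\mathbb{C}_\kappa[z]\to\mathbb{C}_{MA}^\kappa$ is linear with $\Pi_\kappa^\uparrow(z^\alpha)=\binom{\kappa}{\alpha}^{-1}\prod_{i}E_{\alpha_i}(z_{i1},\ldots,z_{i\kappa_i})$ ($E_k$ the $k$-th elementary symmetric polynomial, $\binom{\kappa}{\alpha}=\prod\binom{\kappa_i}{\alpha_i}$); the projection $\Pi_\kappa^\downarrow:\mathbb{C}_{MA}^\kappa\to\mathbb{C}_\kappa[z]$ substitutes $z_{ij}\mapsto z_i$. The polarization of $T$ is $\Pi(T)=\Pi_\gamma^\uparrow\circ T\circ\Pi_\kappa^\downarrow:\mathbb{C}_{MA}^\kappa\to\mathbb{C}_{MA}^\gamma$. The symbol of $T$ is $G_T(z,w)=T[(z+w)^\kappa]=\sum_{\alpha\le\kappa}\binom{\kappa}{\alpha}T(z^\alpha)w^{\kappa-\alpha}\in\mathbb{C}_{\gamma\oplus\kappa}[z_1,\ldots,z_n,w_1,\ldots,w_n]$,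 with $\gamma\oplus\kappa=(\gamma_1,\ldots,\gamma_n,\kappa_1,\ldots,\kappa_n)$; the symbol of the operator $\Pi(T)$ on multi-affine polynomials is $G_{\Pi(T)}=\Pi(T)\big[\prod_{i=1}^n\prod_{j=1}^{\kappa_i}(z_{ij}+w_{ij})\big]$ ($\Pi(T)$ acting on the $z_{ij}$ variables). $\Pi^\uparrow_{\gamma\oplus\kappa}$ polarizes each $z_i$ into $z_{i1},\ldots,z_{i\gamma_i}$ and each $w_i$ into $w_{i1},\ldots,w_{i\kappa_i}$. *)

theory Defs
  imports Complex_Main
begin

text \<open>A polynomial with complex coefficients in variables of type 'v is represented
by its coefficient map: exponent vector (a function 'v \<Rightarrow> nat) \<mapsto> coefficient.\<close>

type_synonym 'v cpoly = "('v \<Rightarrow> nat) \<Rightarrow> complex"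

definition bounded :: "('v \<Rightarrow> nat) \<Rightarrow> 'v cpoly \<Rightarrow> bool" where
  "bounded d p \<longleftrightarrow> (\<forall>\<alpha>. p \<alpha> \<noteq> 0 \<longrightarrow> (\<forall>v. \<alpha> v \<le> d v))"

definition box :: "('v \<Rightarrow> nat) \<Rightarrow> ('v \<Rightarrow> nat) set" where
  "box d = {\<alpha>. \<forall>v. \<alpha> v \<le> d v}"

definition mono :: "('v \<Rightarrow> nat) \<Rightarrow> 'v cpoly" where
  "mono \<alpha> = (\<lambda>\<beta>. if \<beta> = \<alpha> then 1 else 0)"

definition mchoose :: "('v \<Rightarrow> nat) \<Rightarrow> ('v \<Rightarrow> nat) \<Rightarrow> complex" where
  "mchoose d \<alpha> = (\<Prod>v\<in>{v. d v \<noteq> 0}. of_nat (d v choose \<alpha> v))"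

text \<open>kappa in N^n, as a degree bound on the variables z_0,...,z_{n-1}\<close>
definition kz :: "nat \<Rightarrow> (nat \<Rightarrow> nat) \<Rightarrow> nat \<Rightarrow> nat" where
  "kz n \<kappa> i = (if i < n then \<kappa> i else 0)"

text \<open>Polarized variables: (v, j) with j < d v (0-based instead of 1..d v).
 The multi-affine space C_MA^d is the space of polynomials bounded by pind d.\<close>
definition pind :: "('v \<Rightarrow> nat) \<Rightarrow> 'v \<times> nat \<Rightarrow> nat" where
  "pind d x = (if snd x < d (fst x) then 1 else 0)"

definition rowsum :: "('v \<Rightarrow> nat) \<Rightarrow> ('v \<times> nat \<Rightarrow> nat) \<Rightarrow> 'v \<Rightarrow> nat" where
  "rowsum d \<beta> v = (\<Sum>j<d v. \<beta> (v, j))"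

text \<open>coefficient map of  prod_v E_{alpha v}(z_{v,0}, ..., z_{v,d v - 1})\<close>
definition esymprod :: "('v \<Rightarrow> nat) \<Rightarrow> ('v \<Rightarrow> nat) \<Rightarrow> ('v \<times> nat) cpoly" where
  "esymprod d \<alpha> = (\<lambda>\<beta>. if \<beta> \<in> box (pind d) \<and> (\<forall>v. rowsum d \<beta> v = \<alpha> v) then 1 else 0)"

text \<open>polarization operator Pi^up_d (linear extension of z^alpha \<mapsto> binom(d,alpha)^-1 prod E)\<close>
definition polup :: "('v \<Rightarrow> nat) \<Rightarrow> 'v cpoly \<Rightarrow> ('v \<times> nat) cpoly" where
  "polup d p = (\<lambda>\<beta>. \<Sum>\<alpha>\<in>box d. p \<alpha> / mchoose d \<alpha> * esymprod d \<alpha> \<beta>)"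

text \<open>projection Pi^down_d: substitute z_{v,j} \<mapsto> z_v\<close>
definition poldown :: "('v \<Rightarrow> nat) \<Rightarrow> ('v \<times> nat) cpoly \<Rightarrow> 'v cpoly" where
  "poldown d q = (\<lambda>\<alpha>. \<Sum>\<beta>\<in>{\<beta>\<in>box (pind d). \<forall>v. rowsum d \<beta> v = \<alpha> v}. q \<beta>)"

text \<open>symbol of an operator T on polynomials of degree \<le> d:
  G_T(z,w) = T[(z+w)^d] = sum_{alpha \<le> d} binom(d,alpha) T(z^alpha) w^(d-alpha),
  in variables Inl (the z-variables of the target) and Inr (the w-variables).\<close>
definition symbol :: "('v \<Rightarrow> nat) \<Rightarrow> ('v cpoly \<Rightarrow> 'w cpoly) \<Rightarrow> ('w + 'v) cpoly" where
  "symbol d T = (\<lambda>\<zeta>. \<Sum>\<alpha>\<in>box d. mchoose d \<alpha> * T (mono \<alpha>) (\<zeta> \<circ> Inl)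
                        * (if \<zeta> \<circ> Inr = (\<lambda>v. d v - \<alpha> v) then 1 else 0))"

definition polT :: "nat \<Rightarrow> (nat \<Rightarrow> nat) \<Rightarrow> (nat \<Rightarrow> nat) \<Rightarrow> (nat cpoly \<Rightarrow> nat cpoly)
    \<Rightarrow> (nat \<times> nat) cpoly \<Rightarrow> (nat \<times> nat) cpoly" where
  "polT n \<kappa> \<gamma> T = (\<lambda>q. polup (kz n \<gamma>) (T (poldown (kz n \<kappa>) q)))"

fun sumsplit :: "('a + 'b) \<times> nat \<Rightarrow> ('a \<times> nat) + ('b \<times> nat)" where
  "sumsplit (Inl a, j) = Inl (a, j)"
| "sumsplit (Inr b, j) = Inr (b, j)"

definition rename :: "('x \<Rightarrow> 'y) \<Rightarrow> 'x cpoly \<Rightarrow> 'y cpoly" where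
  "rename g p = (\<lambda>\<beta>. p (\<beta> \<circ> g))"

end

theory Submission
  imports Defs "HOL-Library.FuncSet"
begin

lemma fin_box: assumes "finite {v. d v \<noteq> 0}" shows "finite (box (d :: 'v \<Rightarrow> nat))"
proof -
  let ?S = "{v. d v \<noteq> 0}"
  have inj: "inj_on (\<lambda>\<alpha>. restrict \<alpha> ?S) (box d)"
  proof (rule inj_onI)
    fix a b assume a: "a \<in> box d" and b: "b \<in> box d" and e: "restrict a ?S = restrict b ?S"
    show "a = b"
    proof
      fix v
      have ab: "a v \<le> d v" "b v \<le> d v" using a b by (simp_all add: box_def)
      have r: "restrict a ?S v = restrict b ?S v" using e by simp
      show "a v = b v"
      proof (cases "d v = 0")
        case True then show ?thesis using ab by simp
      next
        case False then show ?thesis using r by simp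
      qed
    qed
  qed
  have sub: "(\<lambda>\<alpha>. restrict \<alpha> ?S) ` box d \<subseteq> PiE ?S (\<lambda>v. {..d v})"
    by (clarsimp simp: box_def restrict_PiE_iff)
  have "finite (PiE ?S (\<lambda>v. {..d v}))" by (rule finite_PiE[OF assms]) simp
  then have "finite ((\<lambda>\<alpha>. restrict \<alpha> ?S) ` box d)"
    using sub by (rule finite_subset[rotated])
  then show ?thesis using inj by (rule finite_imageD)
qed

lemma fin_pind: assumes "finite {v. d v \<noteq> 0}" shows "finite {x. pind (d :: 'v \<Rightarrow> nat) x \<noteq> 0}"
proof -
  have "{x. pind d x \<noteq> 0} \<subseteq> Sigma {v. d v \<noteq> 0} (\<lambda>v. {..<d v})"
    by (auto simp: pind_def)
  then show ?thesis using assms by (meson finite_SigmaI finite_lessThan finite_subset)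
qed

lemma fin_kz: "finite {i. kz n \<kappa> i \<noteq> 0}"
  by (rule finite_subset[of _ "{..<n}"]) (auto simp: kz_def split: if_splits)

lemma mchoose_pind: assumes "\<beta> \<in> box (pind d)" shows "mchoose (pind d) \<beta> = 1"
proof -
  have "pind d v choose \<beta> v = 1" if "pind d v \<noteq> 0" for v
  proof -
    have p: "pind d v = 1" using that by (auto simp: pind_def split: if_splits)
    have "\<beta> v \<le> 1" using assms p unfolding box_def by (metis mem_Collect_eq)
    then have "\<beta> v = 0 \<or> \<beta> v = 1" by auto
    then show ?thesis using p by auto
  qed
  then show ?thesis unfolding mchoose_def by (intro prod.neutral) simp
qed

lemma poldown_mono: assumes "finite {v. d v \<noteq> 0}" "\<beta> \<in> box (pind d)"
  shows "poldown d (Defs.mono \<beta>) = Defs.mono (rowsum d \<beta>)"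
proof
  fix \<alpha>
  have f: "finite {\<beta>'\<in>box (pind d). \<forall>v. rowsum d \<beta>' v = \<alpha> v}"
    by (rule finite_subset[OF _ fin_box[OF fin_pind[OF assms(1)]]]) blast
  show "poldown d (Defs.mono \<beta>) \<alpha> = Defs.mono (rowsum d \<beta>) \<alpha>"
    unfolding poldown_def Defs.mono_def
    apply (subst sum.delta[OF f])
    using assms(2) by (auto simp: fun_eq_iff)
qed

lemma rowsum_compl: assumes "z \<in> box (pind d)"
  shows "rowsum d (\<lambda>x. pind d x - z x) v = d v - rowsum d z v"
proof -
  have "(pind d (v,j) - z (v,j)) + z (v,j) = 1" if j: "j < d v" for j
  proof -
    have p: "pind d (v,j) = 1" using j by (simp add: pind_def)
    have "z (v,j) \<le> pind d (v,j)" using assms by (simp add: box_def)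
    then show ?thesis using p by simp
  qed
  then have "(\<Sum>j<d v. pind d (v,j) - z (v,j)) + (\<Sum>j<d v. z (v,j)) = (\<Sum>j<d v. 1)"
    unfolding sum.distrib[symmetric] by (intro sum.cong) auto
  then have "(\<Sum>j<d v. pind d (v,j) - z (v,j)) + (\<Sum>j<d v. z (v,j)) = d v" by simp
  then show ?thesis unfolding rowsum_def by simp
qed

lemma rowsum_box: assumes "z \<in> box (pind d)" shows "rowsum d z \<in> box d"
proof -
  have "rowsum d z v \<le> d v" for v
  proof -
    have "(\<Sum>j<d v. z (v,j)) \<le> (\<Sum>j<d v. 1)"
    proof (rule sum_mono)
      fix j assume "j \<in> {..<d v}"
      then have p: "pind d (v,j) = 1" by (simp add: pind_def)
      have "z (v,j) \<le> pind d (v,j)" using assms by (simp add: box_def)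
      then show "z (v,j) \<le> 1" using p by simp
    qed
    then show ?thesis by (simp add: rowsum_def)
  qed
  then show ?thesis by (simp add: box_def)
qed

lemma lhs_eval:
  fixes d :: "'v \<Rightarrow> nat" and g :: "'w \<Rightarrow> nat" and T :: "'v cpoly \<Rightarrow> 'w cpoly"
  assumes fd: "finite {v. d v \<noteq> 0}"
  shows "symbol (pind d) (\<lambda>q. polup g (T (poldown d q))) \<zeta>
    = (if \<zeta> \<circ> Inr \<in> box (pind d)
       then polup g (T (Defs.mono (\<lambda>v. d v - rowsum d (\<zeta> \<circ> Inr) v))) (\<zeta> \<circ> Inl) else 0)"
proof -
  let ?z = "\<zeta> \<circ> Inr"
  let ?c = "\<lambda>x. pind d x - ?z x"
  have fb: "finite (box (pind d))" using fin_box[OF fin_pind[OF fd]] .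
  have eq: "(?z = (\<lambda>x. pind d x - \<beta> x)) \<longleftrightarrow> (?z \<in> box (pind d) \<and> \<beta> = ?c)"
    if b: "\<beta> \<in> box (pind d)" for \<beta>
  proof
    assume h: "?z = (\<lambda>x. pind d x - \<beta> x)"
    have "\<forall>x. \<beta> x \<le> pind d x" using b by (simp add: box_def)
    then show "?z \<in> box (pind d) \<and> \<beta> = ?c" unfolding h by (auto simp: box_def fun_eq_iff)
  next
    assume h: "?z \<in> box (pind d) \<and> \<beta> = ?c"
    have "\<forall>x. ?z x \<le> pind d x" using h by (simp add: box_def)
    then show "?z = (\<lambda>x. pind d x - \<beta> x)" using h by (auto simp: fun_eq_iff)
  qed
  have "symbol (pind d) (\<lambda>q. polup g (T (poldown d q))) \<zeta>
     = (\<Sum>\<beta>\<in>box (pind d). if \<beta> = ?c then (if ?z \<in> box (pind d) then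
          polup g (T (Defs.mono (rowsum d \<beta>))) (\<zeta> \<circ> Inl) else 0) else 0)"
    unfolding symbol_def
    by (rule sum.cong[OF refl]) (auto simp: eq mchoose_pind poldown_mono[OF fd])
  also have "\<dots> = (if ?c \<in> box (pind d) then (if ?z \<in> box (pind d) then
          polup g (T (Defs.mono (rowsum d ?c))) (\<zeta> \<circ> Inl) else 0) else 0)"
    by (subst sum.delta[OF fb]) (rule refl)
  also have "\<dots> = (if ?z \<in> box (pind d)
       then polup g (T (Defs.mono (\<lambda>v. d v - rowsum d ?z v))) (\<zeta> \<circ> Inl) else 0)"
  proof -
    have "?c \<in> box (pind d)" by (simp add: box_def)
    moreover have "?z \<in> box (pind d) \<Longrightarrow> rowsum d ?c = (\<lambda>v. d v - rowsum d ?z v)"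
      by (rule ext, rule rowsum_compl)
    ultimately show ?thesis by simp
  qed
  finally show ?thesis .
qed

lemma case_sum_bij: "bij_betw (\<lambda>(a,b). case_sum a b) (box g \<times> box d) (box (case_sum g d))"
proof (rule bij_betwI')
  fix x y assume "x \<in> box g \<times> box d" "y \<in> box g \<times> box d"
  obtain a b where x: "x = (a,b)" by fastforce
  obtain a' b' where y: "y = (a',b')" by fastforce
  show "((case x of (a,b) \<Rightarrow> case_sum a b) = (case y of (a,b) \<Rightarrow> case_sum a b)) = (x = y)"
  proof
    assume e: "(case x of (a,b) \<Rightarrow> case_sum a b) = (case y of (a,b) \<Rightarrow> case_sum a b)"
    then have e': "case_sum a b = case_sum a' b'" by (simp add: x y)
    have "a = a'" using arg_cong[OF e', of "\<lambda>f. f \<circ> Inl"] by (simp only: case_sum_o_inj)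
    moreover have "b = b'" using arg_cong[OF e', of "\<lambda>f. f \<circ> Inr"] by (simp only: case_sum_o_inj)
    ultimately show "x = y" by (simp add: x y)
  qed simp
next
  fix x assume x: "x \<in> box g \<times> box d"
  obtain a b where xx: "x = (a,b)" by fastforce
  have "\<forall>v. a v \<le> g v" "\<forall>v. b v \<le> d v" using x by (simp_all add: xx box_def)
  then have "\<forall>v. case_sum a b v \<le> case_sum g d v" by (simp split: sum.split)
  then show "(case x of (a,b) \<Rightarrow> case_sum a b) \<in> box (case_sum g d)"
    by (simp add: xx box_def)
next
  fix y assume y: "y \<in> box (case_sum g d)"
  then have yy: "\<forall>v. y v \<le> case_sum g d v" by (simp add: box_def)
  have a: "y \<circ> Inl \<in> box g" unfolding box_def
  proof (clarify)
    fix v show "(y \<circ> Inl) v \<le> g v" using yy[rule_format, of "Inl v"] by simp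
  qed
  have b: "y \<circ> Inr \<in> box d" unfolding box_def
  proof (clarify)
    fix v show "(y \<circ> Inr) v \<le> d v" using yy[rule_format, of "Inr v"] by simp
  qed
  have "y = case_sum (y \<circ> Inl) (y \<circ> Inr)"
    by (rule ext) (simp split: sum.split)
  then show "\<exists>x\<in>box g \<times> box d. y = (case x of (a,b) \<Rightarrow> case_sum a b)"
    using a b by (intro bexI[of _ "(y \<circ> Inl, y \<circ> Inr)"]) auto
qed

lemma mchoose_sum:
  assumes fg: "finite {v. g v \<noteq> 0}" and fd: "finite {v. d v \<noteq> 0}"
  shows "mchoose (case_sum g d) (case_sum a b) = mchoose g a * mchoose d b"
proof -
  let ?A = "{v. g v \<noteq> 0}" and ?B = "{v. d v \<noteq> 0}"
  let ?f = "\<lambda>v. (of_nat (case_sum g d v choose case_sum a b v) :: complex)"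
  have S: "{v. case_sum g d v \<noteq> 0} = Inl ` ?A \<union> Inr ` ?B"
  proof (rule set_eqI)
    fix x show "x \<in> {v. case_sum g d v \<noteq> 0} \<longleftrightarrow> x \<in> Inl ` ?A \<union> Inr ` ?B"
      by (cases x) auto
  qed
  have "mchoose (case_sum g d) (case_sum a b) = prod ?f (Inl ` ?A \<union> Inr ` ?B)"
    unfolding mchoose_def S ..
  also have "\<dots> = prod ?f (Inl ` ?A) * prod ?f (Inr ` ?B)"
    by (rule prod.union_disjoint) (use fg fd in auto)
  also have "prod ?f (Inl ` ?A) = mchoose g a"
    unfolding mchoose_def by (subst prod.reindex) (auto simp: inj_on_def)
  also have "prod ?f (Inr ` ?B) = mchoose d b"
    unfolding mchoose_def by (subst prod.reindex) (auto simp: inj_on_def)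
  finally show ?thesis .
qed

lemma all_sum_iff: "(\<forall>v. P v) \<longleftrightarrow> ((\<forall>a. P (Inl a)) \<and> (\<forall>b. P (Inr b)))"
proof
  assume "(\<forall>a. P (Inl a)) \<and> (\<forall>b. P (Inr b))"
  then show "\<forall>v. P v" by (intro allI, case_tac v) simp_all
qed simp

lemma all_pair_sum_iff: "(\<forall>x::('a+'b)\<times>nat. P x) \<longleftrightarrow> ((\<forall>a j. P (Inl a, j)) \<and> (\<forall>b j. P (Inr b, j)))"
proof
  assume h: "(\<forall>a j. P (Inl a, j)) \<and> (\<forall>b j. P (Inr b, j))"
  show "\<forall>x. P x"
  proof
    fix x :: "('a+'b)\<times>nat"
    obtain s j where x: "x = (s,j)" by fastforce
    show "P x" using h by (cases s) (simp_all add: x)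
  qed
qed simp

lemma esymprod_sum:
  "esymprod (case_sum g d) (case_sum a b) (\<zeta> \<circ> sumsplit)
    = esymprod g a (\<zeta> \<circ> Inl) * esymprod d b (\<zeta> \<circ> Inr)"
proof -
  have p1: "pind (case_sum g d) (Inl a, j) = pind g (a,j)" for a j by (simp add: pind_def)
  have p2: "pind (case_sum g d) (Inr a, j) = pind d (a,j)" for a j by (simp add: pind_def)
  have r1: "rowsum (case_sum g d) (\<zeta> \<circ> sumsplit) (Inl a) = rowsum g (\<zeta> \<circ> Inl) a" for a
    by (simp add: rowsum_def)
  have r2: "rowsum (case_sum g d) (\<zeta> \<circ> sumsplit) (Inr a) = rowsum d (\<zeta> \<circ> Inr) a" for a
    by (simp add: rowsum_def)
  have A: "((\<zeta> \<circ> sumsplit) \<in> box (pind (case_sum g d))) \<longleftrightarrow>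
     ((\<zeta> \<circ> Inl) \<in> box (pind g) \<and> (\<zeta> \<circ> Inr) \<in> box (pind d))"
    unfolding box_def mem_Collect_eq all_pair_sum_iff[where P="\<lambda>x. (\<zeta> \<circ> sumsplit) x \<le> pind (case_sum g d) x"]
    by (simp add: p1 p2)
  have B: "(\<forall>v. rowsum (case_sum g d) (\<zeta> \<circ> sumsplit) v = case_sum a b v) \<longleftrightarrow>
     ((\<forall>v. rowsum g (\<zeta> \<circ> Inl) v = a v) \<and> (\<forall>v. rowsum d (\<zeta> \<circ> Inr) v = b v))"
    unfolding all_sum_iff[where P="\<lambda>v. rowsum (case_sum g d) (\<zeta> \<circ> sumsplit) v = case_sum a b v"]
    by (simp add: r1 r2)
  show ?thesis unfolding esymprod_def using A B by simp
qed

lemma mchoose_compl: assumes "b \<in> box d" shows "mchoose d (\<lambda>v. d v - b v) = mchoose d b"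
  unfolding mchoose_def
proof (rule prod.cong[OF refl])
  fix v have "b v \<le> d v" using assms by (simp add: box_def)
  then show "of_nat (d v choose (d v - b v)) = (of_nat (d v choose b v) :: complex)"
    by (simp add: binomial_symmetric[symmetric])
qed

lemma mchoose_nz: assumes "finite {v. d v \<noteq> 0}" "b \<in> box d" shows "mchoose d b \<noteq> 0"
proof -
  have "\<forall>v. b v \<le> d v" using assms(2) by (simp add: box_def)
  then have "\<forall>v. (d v choose b v) \<noteq> 0" by (simp add: binomial_eq_0_iff not_less)
  then show ?thesis unfolding mchoose_def using assms(1)
    by (subst prod_zero_iff) simp_all
qed

lemma symbol_collapse:
  fixes d :: "'v \<Rightarrow> nat" and T :: "'v cpoly \<Rightarrow> 'w cpoly"
  assumes fd: "finite {v. d v \<noteq> 0}" and b: "b \<in> box d"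
  shows "symbol d T (case_sum a b) = mchoose d b * T (Defs.mono (\<lambda>v. d v - b v)) a"
proof -
  let ?e = "\<lambda>v. d v - b v"
  have fb: "finite (box d)" using fin_box[OF fd] .
  have bl: "\<forall>v. b v \<le> d v" using b by (simp add: box_def)
  have eq: "(b = (\<lambda>v. d v - c v)) \<longleftrightarrow> c = ?e" if c: "c \<in> box d" for c
  proof -
    have cl: "\<forall>v. c v \<le> d v" using c by (simp add: box_def)
    show ?thesis using bl cl by (auto simp: fun_eq_iff)
  qed
  have e: "?e \<in> box d" by (simp add: box_def)
  have "symbol d T (case_sum a b) = (\<Sum>c\<in>box d. if c = ?e then mchoose d c * T (Defs.mono c) a else 0)"
    unfolding symbol_def case_sum_o_inj
    by (rule sum.cong[OF refl]) (simp add: eq)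
  also have "\<dots> = mchoose d ?e * T (Defs.mono ?e) a"
    by (subst sum.delta[OF fb]) (simp add: e)
  finally show ?thesis using mchoose_compl[OF b] by simp
qed

lemma rhs_eval:
  fixes d :: "'v \<Rightarrow> nat" and g :: "'w \<Rightarrow> nat" and T :: "'v cpoly \<Rightarrow> 'w cpoly"
  assumes fd: "finite {v. d v \<noteq> 0}" and fg: "finite {v. g v \<noteq> 0}"
  shows "rename sumsplit (polup (case_sum g d) (symbol d T)) \<zeta>
    = (if \<zeta> \<circ> Inr \<in> box (pind d)
       then polup g (T (Defs.mono (\<lambda>v. d v - rowsum d (\<zeta> \<circ> Inr) v))) (\<zeta> \<circ> Inl) else 0)"
proof -
  let ?h = "\<lambda>\<alpha>. symbol d T \<alpha> / mchoose (case_sum g d) \<alpha> * esymprod (case_sum g d) \<alpha> (\<zeta> \<circ> sumsplit)"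
  let ?G = "\<lambda>a b. T (Defs.mono (\<lambda>v. d v - b v)) a / mchoose g a * esymprod g a (\<zeta> \<circ> Inl) * esymprod d b (\<zeta> \<circ> Inr)"
  have "rename sumsplit (polup (case_sum g d) (symbol d T)) \<zeta> = (\<Sum>\<alpha>\<in>box (case_sum g d). ?h \<alpha>)"
    by (simp add: rename_def polup_def)
  also have "\<dots> = (\<Sum>x\<in>box g \<times> box d. ?h (case_sum (fst x) (snd x)))"
  proof -
    have "(\<Sum>x\<in>box g \<times> box d. ?h ((\<lambda>(a,b). case_sum a b) x)) = (\<Sum>\<alpha>\<in>box (case_sum g d). ?h \<alpha>)"
      by (rule sum.reindex_bij_betw[OF case_sum_bij])
    then show ?thesis by (simp add: split_def)
  qed
  also have "\<dots> = (\<Sum>a\<in>box g. \<Sum>b\<in>box d. ?h (case_sum a b))"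
    by (simp add: sum.cartesian_product split_def)
  also have "\<dots> = (\<Sum>a\<in>box g. \<Sum>b\<in>box d. ?G a b)"
  proof (intro sum.cong refl)
    fix a b assume b: "b \<in> box d"
    show "?h (case_sum a b) = ?G a b"
      using mchoose_nz[OF fd b]
      by (simp add: symbol_collapse[OF fd b] mchoose_sum[OF fg fd] esymprod_sum)
  qed
  also have "\<dots> = (if \<zeta> \<circ> Inr \<in> box (pind d)
       then polup g (T (Defs.mono (\<lambda>v. d v - rowsum d (\<zeta> \<circ> Inr) v))) (\<zeta> \<circ> Inl) else 0)"
  proof (cases "\<zeta> \<circ> Inr \<in> box (pind d)")
    case False
    then show ?thesis by (simp add: esymprod_def)
  next
    case True
    let ?r = "rowsum d (\<zeta> \<circ> Inr)"
    have r: "?r \<in> box d" using rowsum_box[OF True] .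
    have fb: "finite (box d)" using fin_box[OF fd] .
    have "(\<Sum>b\<in>box d. ?G a b) = T (Defs.mono (\<lambda>v. d v - ?r v)) a / mchoose g a * esymprod g a (\<zeta> \<circ> Inl)" for a
    proof -
      have "(\<Sum>b\<in>box d. ?G a b) = (\<Sum>b\<in>box d. if b = ?r then T (Defs.mono (\<lambda>v. d v - b v)) a / mchoose g a * esymprod g a (\<zeta> \<circ> Inl) else 0)"
        by (rule sum.cong[OF refl]) (auto simp: esymprod_def True fun_eq_iff)
      also have "\<dots> = T (Defs.mono (\<lambda>v. d v - ?r v)) a / mchoose g a * esymprod g a (\<zeta> \<circ> Inl)"
        by (subst sum.delta[OF fb]) (simp add: r)
      finally show ?thesis .
    qed
    then show ?thesis using True by (simp add: polup_def)
  qed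
  finally show ?thesis .
qed


theorem lemma2p5:
  fixes n :: nat and \<kappa> \<gamma> :: "nat \<Rightarrow> nat" and T :: "nat cpoly \<Rightarrow> nat cpoly"
  assumes maps: "\<And>p. bounded (kz n \<kappa>) p \<Longrightarrow> bounded (kz n \<gamma>) (T p)"
    and additive: "\<And>p q. bounded (kz n \<kappa>) p \<Longrightarrow> bounded (kz n \<kappa>) q \<Longrightarrow>
                      T (\<lambda>\<alpha>. p \<alpha> + q \<alpha>) = (\<lambda>\<beta>. T p \<beta> + T q \<beta>)"
    and homogeneous: "\<And>c p. bounded (kz n \<kappa>) p \<Longrightarrow>
                      T (\<lambda>\<alpha>. c * p \<alpha>) = (\<lambda>\<beta>. c * T p \<beta>)"
  shows "symbol (pind (kz n \<kappa>)) (polT n \<kappa> \<gamma> T)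
         = rename sumsplit (polup (case_sum (kz n \<gamma>) (kz n \<kappa>)) (symbol (kz n \<kappa>) T))"
proof
  fix \<zeta>
  show "symbol (pind (kz n \<kappa>)) (polT n \<kappa> \<gamma> T) \<zeta>
       = rename sumsplit (polup (case_sum (kz n \<gamma>) (kz n \<kappa>)) (symbol (kz n \<kappa>) T)) \<zeta>"
    unfolding polT_def
    by (simp only: lhs_eval[OF fin_kz] rhs_eval[OF fin_kz fin_kz])
qed

end
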